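(* Let $|q|<1$, let $x,y$ be complex numbers and let $n,m\ge 0$ be integers. Then $$\sum_{k=0}^{\min\{n,m\}}{n\brack k}{m\brack k}(q;q)_k\,x^k\,h_{n+m-2k}(x|q)=\left(\sum_{k=0}^n{n\brack k}y^k\,h_{n-k}(x,y|q)\right)\left(\sum_{j=0}^m{m\brack j}y^j\,h_{m-j}(x,y|q)\right).$$
   Context: Throughout $|q|<1$. $(a;q)_n=\prod_{j=0}^{n-1}(1-aq^j)$, ${n\brack k}=\frac{(q;q)_n}{(q;q)_k(q;q)_{n-k}}$. The Rogers–Szegő polynomials are $h_n(x|q)=\sum_{k=0}^n{n\brack k}x^k$. $P_n(x,y)=(x-y)(x-qy)\cdots(x-q^{n-1}y)$ with $P_0=1$, and the bivariate Rogers–Szegő polynomials are $h_n(x,y|q)=\sum_{k=0}^n{n\brack k}P_k(x,y)$. *)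

theory Defs
  imports Complex_Main
begin

definition qpoch :: "complex \<Rightarrow> complex \<Rightarrow> nat \<Rightarrow> complex" where
  "qpoch a q n = (\<Prod>j<n. 1 - a * q ^ j)"

definition qbinom :: "complex \<Rightarrow> nat \<Rightarrow> nat \<Rightarrow> complex" where
  "qbinom q n k = qpoch q q n / (qpoch q q k * qpoch q q (n - k))"

definition rs :: "complex \<Rightarrow> nat \<Rightarrow> complex \<Rightarrow> complex" where
  "rs q n x = (\<Sum>k=0..n. qbinom q n k * x ^ k)"

definition Pq :: "complex \<Rightarrow> nat \<Rightarrow> complex \<Rightarrow> complex \<Rightarrow> complex" where
  "Pq q n x y = (\<Prod>j<n. x - q ^ j * y)"

definition rs2 :: "complex \<Rightarrow> nat \<Rightarrow> complex \<Rightarrow> complex \<Rightarrow> complex" where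
  "rs2 q n x y = (\<Sum>k=0..n. qbinom q n k * Pq q k x y)"

end

theory Submission
  imports Defs
begin


definition gb :: "complex \<Rightarrow> nat \<Rightarrow> nat \<Rightarrow> complex" where
  "gb q n k = (if k \<le> n then qpoch q q n / (qpoch q q k * qpoch q q (n - k)) else 0)"

lemma qp_Suc: "qpoch q q (Suc n) = qpoch q q n * (1 - q ^ Suc n)"
  by (simp add: qpoch_def)

lemma qp_0: "qpoch q q 0 = 1"
  by (simp add: qpoch_def)

lemma pow_ne1: fixes q :: complex assumes "norm q < 1" shows "1 - q ^ Suc n \<noteq> 0"
proof
  assume "1 - q ^ Suc n = 0"
  then have "q ^ Suc n = 1" by simp
  then have "norm (q ^ Suc n) = 1" by simp
  then have "norm q ^ Suc n = 1" by (simp only: norm_power)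
  moreover have "norm q ^ Suc n < 1"
    using power_less_one_iff[of "norm q" "Suc n"] assms by simp
  ultimately show False by simp
qed

lemma qp_nz: assumes "norm q < 1" shows "qpoch q q n \<noteq> 0"
proof (induction n)
  case (Suc n)
  have "1 - q ^ Suc n \<noteq> 0" by (rule pow_ne1[OF assms])
  with Suc show ?case by (simp only: qp_Suc) simp
qed (simp add: qp_0)

context
  fixes q :: complex
  assumes q: "norm q < 1"
begin

lemma gb_zero: "k > n \<Longrightarrow> gb q n k = 0" by (simp add: gb_def)
lemma gb_n0: "gb q n 0 = 1" using qp_nz[OF q] by (simp add: gb_def qp_0)
lemma gb_nn: "gb q n n = 1" using qp_nz[OF q] by (simp add: gb_def qp_0)

lemma pascal_alg:
  fixes P A B u v :: complex
  assumes "A \<noteq> 0" "B \<noteq> 0" "1 - u \<noteq> 0" "1 - v \<noteq> 0"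
  shows "P * (1 - u * v) / (A * (1 - u) * (B * (1 - v))) = u * (P / (A * (1 - u) * B)) + P / (A * (B * (1 - v)))"
proof -
  define U where "U = 1 - u"
  define V where "V = 1 - v"
  have u: "u = 1 - U" and v: "v = 1 - V" by (simp_all add: U_def V_def)
  have "U \<noteq> 0" "V \<noteq> 0" using assms by (simp_all add: U_def V_def)
  then show ?thesis unfolding u v using assms(1,2) by (simp add: field_simps)
qed

lemma gb_pascal: "gb q (Suc n) (Suc k) = q ^ Suc k * gb q n (Suc k) + gb q n k"
proof (cases "k < n")
  case True
  then obtain d where n: "n = k + Suc d" by (metis add_Suc_right less_imp_Suc_add)
  have e1: "Suc n - Suc k = Suc d" "n - Suc k = d" "n - k = Suc d" using n by auto
  have pw: "q ^ Suc n = q ^ Suc k * q ^ Suc d" using n by (simp add: power_add[symmetric])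
  have "gb q (Suc n) (Suc k) = qpoch q q n * (1 - q ^ Suc n) / (qpoch q q k * (1 - q ^ Suc k) * (qpoch q q d * (1 - q ^ Suc d)))"
    using True by (simp only: gb_def e1 qp_Suc) simp
  also have "\<dots> = q ^ Suc k * (qpoch q q n / (qpoch q q k * (1 - q ^ Suc k) * qpoch q q d)) + qpoch q q n / (qpoch q q k * (qpoch q q d * (1 - q ^ Suc d)))"
    unfolding pw by (rule pascal_alg[OF qp_nz[OF q] qp_nz[OF q] pow_ne1[OF q] pow_ne1[OF q]])
  also have "\<dots> = q ^ Suc k * gb q n (Suc k) + gb q n k"
    using True by (simp only: gb_def e1 qp_Suc) simp
  finally show ?thesis .
next
  case False
  then show ?thesis
    by (cases "k = n") (auto simp: gb_def qp_0 qp_nz[OF q])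
qed

lemma gb_G1: "(1 - q ^ Suc n) * gb q n k = (1 - q ^ Suc k) * gb q (Suc n) (Suc k)"
proof (cases "k \<le> n")
  case True
  have nz: "qpoch q q j \<noteq> 0" "1 - q ^ Suc j \<noteq> 0" for j using qp_nz[OF q] pow_ne1[OF q] by auto
  have "(1 - q ^ Suc k) * gb q (Suc n) (Suc k) = (1 - q ^ Suc k) * (qpoch q q n * (1 - q ^ Suc n) / (qpoch q q k * (1 - q ^ Suc k) * qpoch q q (n - k)))"
    using True by (simp only: gb_def qp_Suc) simp
  also have "\<dots> = (1 - q ^ Suc n) * gb q n k"
    using True nz[of k] by (simp add: gb_def del: power_Suc)
  finally show ?thesis by simp
qed (simp add: gb_def)

lemma gb_G2: "(1 - q ^ Suc n) * gb q n k = (1 - q ^ (Suc n - k)) * gb q (Suc n) k"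
proof (cases "k \<le> n")
  case True
  have nz: "qpoch q q j \<noteq> 0" "1 - q ^ Suc j \<noteq> 0" for j using qp_nz[OF q] pow_ne1[OF q] by auto
  have e: "Suc n - k = Suc (n - k)" using True by simp
  have "(1 - q ^ (Suc n - k)) * gb q (Suc n) k = (1 - q ^ Suc (n - k)) * (qpoch q q n * (1 - q ^ Suc n) / (qpoch q q k * (qpoch q q (n - k) * (1 - q ^ Suc (n - k)))))"
    using True by (simp only: gb_def qp_Suc e) simp
  also have "\<dots> = (1 - q ^ Suc n) * gb q n k"
    using True nz[of "n-k"] by (simp add: gb_def del: power_Suc)
  finally show ?thesis by simp
next
  case False
  then show ?thesis by (cases "k = Suc n") (auto simp: gb_def)
qed

lemma gb_G3: "gb q n (Suc k) * (1 - q ^ Suc k) = gb q n k * (1 - q ^ (n - k))"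
proof (cases "k < n")
  case True
  have nz: "qpoch q q j \<noteq> 0" "1 - q ^ Suc j \<noteq> 0" for j using qp_nz[OF q] pow_ne1[OF q] by auto
  have e: "n - k = Suc (n - Suc k)" using True by simp
  have "gb q n k * (1 - q ^ (n - k)) = qpoch q q n / (qpoch q q k * (qpoch q q (n - Suc k) * (1 - q ^ Suc (n - Suc k)))) * (1 - q ^ Suc (n - Suc k))"
    using True by (simp only: gb_def qp_Suc e) simp
  also have "\<dots> = qpoch q q n / (qpoch q q k * qpoch q q (n - Suc k))"
    using nz[of "n - Suc k"] by (simp del: power_Suc)
  also have "\<dots> = gb q n (Suc k) * (1 - q ^ Suc k)"
    using True nz[of k] by (simp add: gb_def qp_Suc del: power_Suc)
  finally show ?thesis by simp
next
  case False
  then show ?thesis by (cases "k = n") (auto simp: gb_def)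
qed

end


definition hh :: "complex \<Rightarrow> nat \<Rightarrow> complex \<Rightarrow> complex" where
  "hh q n x = (\<Sum>k\<le>n. gb q n k * x ^ k)"

lemma sum_ext_bound:
  fixes f :: "nat \<Rightarrow> complex"
  assumes "\<And>k. k > B \<Longrightarrow> f k = 0" "B \<le> K"
  shows "(\<Sum>k\<le>K. f k) = (\<Sum>k\<le>B. f k)"
  by (rule sum.mono_neutral_right) (use assms in auto)

lemma sum_shift0:
  fixes f :: "nat \<Rightarrow> complex"
  assumes "f 0 = 0" "\<And>k. k > B \<Longrightarrow> f k = 0" "B \<le> K"
  shows "(\<Sum>k\<le>K. f k) = (\<Sum>k\<le>K. f (Suc k))"
proof -
  have "(\<Sum>k\<le>Suc K. f k) = f 0 + (\<Sum>k\<le>K. f (Suc k))" by (rule sum.atMost_Suc_shift)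
  moreover have "(\<Sum>k\<le>Suc K. f k) = (\<Sum>k\<le>K. f k)"
    using sum_ext_bound[of B f "Suc K"] sum_ext_bound[of B f K] assms by simp
  ultimately show ?thesis using assms(1) by simp
qed

context
  fixes q :: complex
  assumes q: "norm q < 1"
begin

lemma hh_ext: "n \<le> K \<Longrightarrow> (\<Sum>k\<le>K. gb q n k * x ^ k) = hh q n x"
  unfolding hh_def by (rule sum_ext_bound) (auto simp: gb_zero[OF q])

lemma hh_0: "hh q 0 x = 1" by (simp add: hh_def gb_n0[OF q])
lemma hh_at0: "hh q n 0 = 1"
  unfolding hh_def by (simp add: gb_n0[OF q] power_0_left sum.atMost_shift del: sum.atMost_Suc)

lemma hh_H1: "hh q n x - hh q n (q * x) = (1 - q ^ n) * x * hh q (n - 1) x"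
proof (cases n)
  case 0
  then show ?thesis by (simp add: hh_0)
next
  case (Suc m)
  have "hh q n x - hh q n (q * x) = (\<Sum>k\<le>Suc m. gb q (Suc m) k * (1 - q ^ k) * x ^ k)"
    unfolding hh_def Suc by (simp add: sum_subtractf[symmetric] power_mult_distrib algebra_simps)
  also have "\<dots> = (\<Sum>k\<le>m. gb q (Suc m) (Suc k) * (1 - q ^ Suc k) * x ^ Suc k)"
    by (subst sum.atMost_Suc_shift) simp
  also have "\<dots> = (\<Sum>k\<le>m. (1 - q ^ Suc m) * x * (gb q m k * x ^ k))"
  proof (rule sum.cong)
    fix k assume "k \<in> {..m}"
    have "gb q (Suc m) (Suc k) * (1 - q ^ Suc k) = (1 - q ^ Suc m) * gb q m k"
      using gb_G1[OF q, of m k] by (simp only: mult_ac)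
    then show "gb q (Suc m) (Suc k) * (1 - q ^ Suc k) * x ^ Suc k = (1 - q ^ Suc m) * x * (gb q m k * x ^ k)"
      by (simp only: power_Suc mult_ac)
  qed simp
  also have "\<dots> = (1 - q ^ n) * x * hh q (n - 1) x"
    by (simp add: hh_def sum_distrib_left Suc)
  finally show ?thesis .
qed

lemma hh_R1: "hh q (Suc a) x = x * hh q a x + hh q a (q * x)"
proof -
  have "hh q (Suc a) x = 1 + (\<Sum>k\<le>a. (q ^ Suc k * gb q a (Suc k) + gb q a k) * x ^ Suc k)"
    unfolding hh_def by (subst sum.atMost_Suc_shift) (simp add: gb_n0[OF q] gb_pascal[OF q] del: power_Suc)
  also have "\<dots> = 1 + (\<Sum>k\<le>a. gb q a (Suc k) * (q * x) ^ Suc k) + x * hh q a x"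
    by (simp add: hh_def sum.distrib sum_distrib_left algebra_simps power_mult_distrib del: power_Suc)
       (simp add: mult_ac)
  also have "1 + (\<Sum>k\<le>a. gb q a (Suc k) * (q * x) ^ Suc k) = (\<Sum>k\<le>Suc a. gb q a k * (q * x) ^ k)"
    by (subst sum.atMost_Suc_shift) (simp add: gb_n0[OF q] del: power_Suc)
  also have "\<dots> = hh q a (q * x)" by (rule hh_ext) simp
  finally show ?thesis by simp
qed

lemma hh_TT: "(1 + x) * hh q j x = hh q (Suc j) x + x * (1 - q ^ j) * hh q (j - 1) x"
  using hh_R1[of j x] hh_H1[of j x] by (simp add: algebra_simps)

end


definition cc :: "complex \<Rightarrow> nat \<Rightarrow> nat \<Rightarrow> nat \<Rightarrow> complex" where
  "cc q n m k = gb q n k * gb q m k * qpoch q q k"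

definition SS :: "complex \<Rightarrow> nat \<Rightarrow> nat \<Rightarrow> complex \<Rightarrow> complex" where
  "SS q n m x = (\<Sum>k\<le>n+m. cc q n m k * x ^ k * hh q (n + m - 2 * k) x)"

context
  fixes q :: complex
  assumes q: "norm q < 1"
begin

lemma cc_zero: "k > n \<or> k > m \<Longrightarrow> cc q n m k = 0"
  by (auto simp: cc_def gb_zero[OF q])

lemma cc_C1: "cc q n m (Suc k) * (1 - q ^ Suc k) = cc q n m k * (1 - q ^ (n - k)) * (1 - q ^ (m - k))"
proof -
  have "cc q n m (Suc k) * (1 - q ^ Suc k) = (gb q n (Suc k) * (1 - q ^ Suc k)) * (gb q m (Suc k) * (1 - q ^ Suc k)) * qpoch q q k"
    by (simp only: cc_def qp_Suc mult_ac)
  also have "\<dots> = cc q n m k * (1 - q ^ (n - k)) * (1 - q ^ (m - k))"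
    by (simp only: gb_G3[OF q] cc_def mult_ac)
  finally show ?thesis .
qed

lemma cc_C2: "(1 - q ^ Suc n) * cc q n m k = (1 - q ^ (Suc n - k)) * cc q (Suc n) m k"
  unfolding cc_def using gb_G2[OF q, of n k] by (metis mult.assoc)

lemma cc_C2': "(1 - q ^ Suc m) * cc q n m k = (1 - q ^ (Suc m - k)) * cc q n (Suc m) k"
  unfolding cc_def using gb_G2[OF q, of m k] by (metis mult.assoc mult.left_commute)

lemma cc_C3: "(1 - q ^ Suc n) * (1 - q ^ Suc m) * cc q n m k = cc q (Suc n) (Suc m) (Suc k) * (1 - q ^ Suc k)"
proof -
  have "(1 - q ^ Suc n) * (1 - q ^ Suc m) * cc q n m k = ((1 - q ^ Suc n) * gb q n k) * ((1 - q ^ Suc m) * gb q m k) * qpoch q q k"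
    by (simp only: cc_def mult_ac)
  also have "\<dots> = ((1 - q ^ Suc k) * gb q (Suc n) (Suc k)) * ((1 - q ^ Suc k) * gb q (Suc m) (Suc k)) * qpoch q q k"
    by (simp only: gb_G1[OF q])
  also have "\<dots> = cc q (Suc n) (Suc m) (Suc k) * (1 - q ^ Suc k)"
    by (simp only: cc_def qp_Suc mult_ac)
  finally show ?thesis .
qed

lemma SS_main:
  assumes n: "n = Suc n'" and m: "m = Suc m'"
  shows "SS q n m x - SS q n m (q * x) =
    x * ((1 - q ^ n) * SS q n' m x + (1 - q ^ m) * SS q n m' x - (1 - q ^ n) * (1 - q ^ m) * x * SS q n' m' x)"
proof -
  define N where "N = n + m"
  define c where "c = cc q n m"
  have cz: "c k = 0" if "k > min n m" for k unfolding c_def by (rule cc_zero) (use that in auto)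
  define X where "X k = c k * (1 - q ^ k) * x ^ k * hh q (N - 2 * k) x" for k
  define R where "R k = c k * x ^ Suc k * hh q (N - 2 * k - 1) x" for k
  define Z where "Z k = q ^ k * (1 - q ^ (N - 2 * k)) * R k" for k
  define Y where "Y k = c k * (1 - q ^ k) * x ^ k * hh q (Suc (N - 2 * k)) x" for k
  define W where "W k = (1 - q ^ k) * (1 - q ^ (N - 2 * k)) * R k" for k
  have BN: "min n m \<le> N" by (simp add: N_def)
  have e1: "SS q n m x - SS q n m (q * x) = (\<Sum>k\<le>N. X k) + (\<Sum>k\<le>N. Z k)"
  proof -
    have "SS q n m x - SS q n m (q * x) = (\<Sum>k\<le>N. c k * x ^ k * hh q (N - 2 * k) x - c k * (q * x) ^ k * hh q (N - 2 * k) (q * x))"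
      by (simp add: SS_def sum_subtractf N_def c_def)
    also have "\<dots> = (\<Sum>k\<le>N. X k + Z k)"
    proof (rule sum.cong)
      fix k
      have h: "hh q (N - 2 * k) (q * x) = hh q (N - 2 * k) x - (1 - q ^ (N - 2 * k)) * x * hh q (N - 2 * k - 1) x"
        using hh_H1[OF q, of "N - 2 * k" x] by (simp add: algebra_simps)
      show "c k * x ^ k * hh q (N - 2 * k) x - c k * (q * x) ^ k * hh q (N - 2 * k) (q * x) = X k + Z k"
        unfolding h X_def Z_def R_def by (simp add: power_mult_distrib algebra_simps)
    qed simp
    finally show ?thesis by (simp add: sum.distrib)
  qed
  have e2: "x * ((1 - q ^ n) * SS q n' m x) = (\<Sum>k\<le>N. (1 - q ^ (n - k)) * R k)"
  proof -
    have "x * ((1 - q ^ n) * SS q n' m x) = (\<Sum>k\<le>n'+m. x * (1 - q ^ n) * cc q n' m k * x ^ k * hh q (n' + m - 2 * k) x)"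
      by (simp add: SS_def sum_distrib_left mult_ac)
    also have "\<dots> = (\<Sum>k\<le>N. x * (1 - q ^ n) * cc q n' m k * x ^ k * hh q (n' + m - 2 * k) x)"
      by (rule sum_ext_bound[symmetric]) (auto simp: N_def n cc_zero)
    also have "\<dots> = (\<Sum>k\<le>N. (1 - q ^ (n - k)) * R k)"
    proof (rule sum.cong)
      fix k
      have a: "n' + m - 2 * k = N - 2 * k - 1" by (simp add: N_def n)
      have b: "(1 - q ^ n) * cc q n' m k = (1 - q ^ (n - k)) * c k"
        unfolding n c_def by (rule cc_C2)
      show "x * (1 - q ^ n) * cc q n' m k * x ^ k * hh q (n' + m - 2 * k) x = (1 - q ^ (n - k)) * R k"
        unfolding R_def a using b by (simp add: mult_ac)
    qed simp
    finally show ?thesis .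
  qed
  have e3: "x * ((1 - q ^ m) * SS q n m' x) = (\<Sum>k\<le>N. (1 - q ^ (m - k)) * R k)"
  proof -
    have "x * ((1 - q ^ m) * SS q n m' x) = (\<Sum>k\<le>n+m'. x * (1 - q ^ m) * cc q n m' k * x ^ k * hh q (n + m' - 2 * k) x)"
      by (simp add: SS_def sum_distrib_left mult_ac)
    also have "\<dots> = (\<Sum>k\<le>N. x * (1 - q ^ m) * cc q n m' k * x ^ k * hh q (n + m' - 2 * k) x)"
      by (rule sum_ext_bound[symmetric]) (auto simp: N_def m cc_zero)
    also have "\<dots> = (\<Sum>k\<le>N. (1 - q ^ (m - k)) * R k)"
    proof (rule sum.cong)
      fix k
      have a: "n + m' - 2 * k = N - 2 * k - 1" by (simp add: N_def m)
      have b: "(1 - q ^ m) * cc q n m' k = (1 - q ^ (m - k)) * c k"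
        unfolding m c_def by (rule cc_C2')
      show "x * (1 - q ^ m) * cc q n m' k * x ^ k * hh q (n + m' - 2 * k) x = (1 - q ^ (m - k)) * R k"
        unfolding R_def a using b by (simp add: mult_ac)
    qed simp
    finally show ?thesis .
  qed
  have e4: "(1 - q ^ n) * (1 - q ^ m) * x * SS q n' m' x = (\<Sum>k\<le>N. X k)"
  proof -
    have "(1 - q ^ n) * (1 - q ^ m) * x * SS q n' m' x = (\<Sum>k\<le>n'+m'. (1 - q ^ n) * (1 - q ^ m) * cc q n' m' k * x * x ^ k * hh q (n' + m' - 2 * k) x)"
      by (simp add: SS_def sum_distrib_left mult_ac)
    also have "\<dots> = (\<Sum>k\<le>n'+m'. X (Suc k))"
    proof (rule sum.cong)
      fix k
      have a: "n' + m' - 2 * k = N - 2 * Suc k" by (simp add: N_def n m)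
      have b: "(1 - q ^ n) * (1 - q ^ m) * cc q n' m' k = c (Suc k) * (1 - q ^ Suc k)"
        unfolding n m c_def by (rule cc_C3)
      show "(1 - q ^ n) * (1 - q ^ m) * cc q n' m' k * x * x ^ k * hh q (n' + m' - 2 * k) x = X (Suc k)"
        unfolding X_def a b[symmetric] by (simp add: mult_ac)
    qed simp
    also have "\<dots> = (\<Sum>k\<le>N. X (Suc k))"
      by (rule sum_ext_bound[symmetric]) (auto simp: N_def n m X_def cz)
    also have "\<dots> = (\<Sum>k\<le>N. X k)"
      by (rule sum_shift0[symmetric, of _ "min n m"]) (auto simp: X_def cz BN)
    finally show ?thesis .
  qed
  have e5: "(1 + x) * (\<Sum>k\<le>N. X k) = (\<Sum>k\<le>N. Y k) + (\<Sum>k\<le>N. W k)"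
  proof -
    have "(1 + x) * (\<Sum>k\<le>N. X k) = (\<Sum>k\<le>N. Y k + W k)"
      unfolding sum_distrib_left
    proof (rule sum.cong)
      fix k
      have t: "(1 + x) * hh q (N - 2 * k) x = hh q (Suc (N - 2 * k)) x + x * (1 - q ^ (N - 2 * k)) * hh q (N - 2 * k - 1) x"
        by (rule hh_TT[OF q])
      have "(1 + x) * X k = c k * (1 - q ^ k) * x ^ k * ((1 + x) * hh q (N - 2 * k) x)"
        by (simp add: X_def mult_ac)
      also have "\<dots> = Y k + W k"
        unfolding t Y_def W_def R_def by (simp add: algebra_simps)
      finally show "(1 + x) * X k = Y k + W k" .
    qed simp
    then show ?thesis by (simp add: sum.distrib)
  qed
  have e6: "(\<Sum>k\<le>N. Y k) = (\<Sum>k\<le>N. (1 - q ^ (n - k)) * (1 - q ^ (m - k)) * R k)"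
  proof -
    have "(\<Sum>k\<le>N. Y k) = (\<Sum>k\<le>N. Y (Suc k))"
      by (rule sum_shift0[of _ "min n m"]) (auto simp: Y_def cz BN)
    also have "\<dots> = (\<Sum>k\<le>N. (1 - q ^ (n - k)) * (1 - q ^ (m - k)) * R k)"
    proof (rule sum.cong)
      fix k
      show "Y (Suc k) = (1 - q ^ (n - k)) * (1 - q ^ (m - k)) * R k"
      proof (cases "Suc k \<le> n \<and> Suc k \<le> m")
        case True
        have a: "Suc (N - 2 * Suc k) = N - 2 * k - 1" unfolding N_def using True by arith
        have "Y (Suc k) = (c (Suc k) * (1 - q ^ Suc k)) * x ^ Suc k * hh q (Suc (N - 2 * Suc k)) x"
          by (simp add: Y_def mult_ac)
        also have "\<dots> = (1 - q ^ (n - k)) * (1 - q ^ (m - k)) * R k"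
          unfolding c_def cc_C1 a by (simp add: R_def c_def mult_ac)
        finally show ?thesis .
      next
        case False
        then have "n - k = 0 \<or> m - k = 0" by auto
        moreover have "c (Suc k) = 0" using False cz by auto
        ultimately show ?thesis by (auto simp: Y_def)
      qed
    qed simp
    finally show ?thesis .
  qed
  have e7: "(\<Sum>k\<le>N. (1 - q ^ (n - k)) * (1 - q ^ (m - k)) * R k) + (\<Sum>k\<le>N. W k) + (\<Sum>k\<le>N. Z k)
      = (\<Sum>k\<le>N. (1 - q ^ (n - k)) * R k) + (\<Sum>k\<le>N. (1 - q ^ (m - k)) * R k)"
  proof -
    have "(\<Sum>k\<le>N. (1 - q ^ (n - k)) * (1 - q ^ (m - k)) * R k + W k + Z k) = (\<Sum>k\<le>N. (1 - q ^ (n - k)) * R k + (1 - q ^ (m - k)) * R k)"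
    proof (rule sum.cong)
      fix k
      show "(1 - q ^ (n - k)) * (1 - q ^ (m - k)) * R k + W k + Z k = (1 - q ^ (n - k)) * R k + (1 - q ^ (m - k)) * R k"
      proof (cases "k \<le> n \<and> k \<le> m")
        case True
        have p: "q ^ (N - 2 * k) = q ^ (n - k) * q ^ (m - k)"
        proof -
          have "N - 2 * k = (n - k) + (m - k)" unfolding N_def using True by arith
          then show ?thesis by (simp add: power_add)
        qed
        show ?thesis unfolding W_def Z_def p by (simp add: algebra_simps)
      next
        case False
        then have "R k = 0" using cz by (auto simp: R_def)
        then show ?thesis by (simp add: W_def Z_def)
      qed
    qed simp
    then show ?thesis by (simp add: sum.distrib)
  qed
  show ?thesis
  proof -
    have "x * ((1 - q ^ n) * SS q n' m x + (1 - q ^ m) * SS q n m' x - (1 - q ^ n) * (1 - q ^ m) * x * SS q n' m' x)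
      = x * ((1 - q ^ n) * SS q n' m x) + x * ((1 - q ^ m) * SS q n m' x) - x * ((1 - q ^ n) * (1 - q ^ m) * x * SS q n' m' x)"
      by (simp add: algebra_simps)
    also have "\<dots> = (\<Sum>k\<le>N. X k) + (\<Sum>k\<le>N. Z k)"
      unfolding e2 e3 e4 e7[symmetric] e6[symmetric] using e5 by (simp add: algebra_simps)
    finally show ?thesis using e1 by simp
  qed
qed

end


context
  fixes q :: complex
  assumes q: "norm q < 1"
begin

lemma cc_00: "cc q n m 0 = 1" by (simp add: cc_def gb_n0[OF q] qp_0)

lemma SS_0m: "SS q 0 m x = hh q m x"
proof -
  have "SS q 0 m x = (\<Sum>k\<le>0. cc q 0 m k * x ^ k * hh q (0 + m - 2 * k) x)"
    unfolding SS_def by (rule sum_ext_bound) (auto simp: cc_zero[OF q])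
  then show ?thesis by (simp add: cc_00)
qed

lemma SS_n0: "SS q n 0 x = hh q n x"
proof -
  have "SS q n 0 x = (\<Sum>k\<le>0. cc q n 0 k * x ^ k * hh q (n + 0 - 2 * k) x)"
    unfolding SS_def by (rule sum_ext_bound) (auto simp: cc_zero[OF q])
  then show ?thesis by (simp add: cc_00)
qed

lemma SS_at0: "SS q n m 0 = 1"
proof -
  have "SS q n m 0 = (\<Sum>k\<le>0. cc q n m k * 0 ^ k * hh q (n + m - 2 * k) 0)"
    unfolding SS_def by (rule sum_ext_bound) auto
  then show ?thesis by (simp add: cc_00 hh_at0[OF q])
qed

lemma F_cont: "isCont (\<lambda>x. hh q n x * hh q m x - SS q n m x) z"
  unfolding SS_def hh_def by (intro continuous_intros)

lemma prod_formula: "hh q n x * hh q m x = SS q n m x"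
proof (induction "n + m" arbitrary: n m x rule: less_induct)
  case less
  show ?case
  proof (cases "n = 0 \<or> m = 0")
    case True
    then show ?thesis
    proof
      assume "n = 0" then show ?thesis by (simp add: SS_0m hh_0[OF q])
    next
      assume "m = 0" then show ?thesis by (simp add: SS_n0 hh_0[OF q])
    qed
  next
    case False
    then obtain n' m' where n: "n = Suc n'" and m: "m = Suc m'" by (metis not0_implies_Suc)
    have IH1: "hh q n' z * hh q m z = SS q n' m z" for z by (rule less) (simp add: n)
    have IH2: "hh q n z * hh q m' z = SS q n m' z" for z by (rule less) (simp add: m)
    have IH3: "hh q n' z * hh q m' z = SS q n' m' z" for z by (rule less) (simp add: n m)
    define F where "F z = hh q n z * hh q m z - SS q n m z" for z
    have step: "F z = F (q * z)" for z
    proof -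
      have h1: "hh q n (q * z) = hh q n z - (1 - q ^ n) * z * hh q n' z"
        using hh_H1[OF q, of n z] by (simp add: n algebra_simps)
      have h2: "hh q m (q * z) = hh q m z - (1 - q ^ m) * z * hh q m' z"
        using hh_H1[OF q, of m z] by (simp add: m algebra_simps)
      have "hh q n z * hh q m z - hh q n (q * z) * hh q m (q * z)
          = z * ((1 - q ^ n) * (hh q n' z * hh q m z) + (1 - q ^ m) * (hh q n z * hh q m' z)
              - (1 - q ^ n) * (1 - q ^ m) * z * (hh q n' z * hh q m' z))"
        unfolding h1 h2 by (simp add: algebra_simps)
      also have "\<dots> = SS q n m z - SS q n m (q * z)"
        unfolding IH1 IH2 IH3 by (rule SS_main[OF q n m, symmetric])
      finally show ?thesis unfolding F_def by (simp add: algebra_simps)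
    qed
    have iter: "F x = F (q ^ j * x)" for j
    proof (induction j)
      case (Suc j)
      then show ?case using step[of "q ^ j * x"] by (simp add: mult.assoc)
    qed simp
    have lim0: "(\<lambda>j. q ^ j * x) \<longlonglongrightarrow> 0"
      using tendsto_mult[OF LIMSEQ_power_zero[OF q] tendsto_const[of x]] by simp
    have "(\<lambda>j. F (q ^ j * x)) \<longlonglongrightarrow> F 0"
      using isCont_tendsto_compose[OF F_cont lim0] unfolding F_def .
    then have "(\<lambda>j. F x) \<longlonglongrightarrow> F 0" using iter by simp
    then have "F x = F 0" by (simp add: LIMSEQ_const_iff)
    also have "F 0 = 0" by (simp add: F_def hh_at0[OF q] SS_at0)
    finally show ?thesis by (simp add: F_def)
  qed
qed

lemma Pq_Suc: "Pq q (Suc j) x y = Pq q j x y * (x - q ^ j * y)"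
  by (simp add: Pq_def)

lemma gb_eq: "k \<le> n \<Longrightarrow> gb q n k = qbinom q n k"
  by (simp add: gb_def qbinom_def)

lemma rs_hh: "rs q n x = hh q n x"
  unfolding rs_def hh_def atLeast0AtMost by (rule sum.cong) (auto simp: gb_eq)

lemma rs2_gb: "rs2 q n x y = (\<Sum>j\<le>n. gb q n j * Pq q j x y)"
  unfolding rs2_def atLeast0AtMost by (rule sum.cong) (auto simp: gb_eq)

lemma A1: "x ^ s = (\<Sum>j\<le>s. gb q s j * Pq q j x y * y ^ (s - j))"
proof (induction s)
  case 0
  then show ?case by (simp add: gb_n0[OF q] Pq_def)
next
  case (Suc s)
  have "(\<Sum>j\<le>Suc s. gb q (Suc s) j * Pq q j x y * y ^ (Suc s - j))
      = y ^ Suc s + (\<Sum>j\<le>s. (q ^ Suc j * gb q s (Suc j) + gb q s j) * Pq q (Suc j) x y * y ^ (s - j))"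
    by (subst sum.atMost_Suc_shift) (simp add: gb_n0[OF q] gb_pascal[OF q] Pq_def del: power_Suc)
  also have "\<dots> = (y ^ Suc s + (\<Sum>j\<le>s. q ^ Suc j * gb q s (Suc j) * Pq q (Suc j) x y * y ^ (s - j)))
       + (\<Sum>j\<le>s. gb q s j * Pq q j x y * (x - q ^ j * y) * y ^ (s - j))"
    by (simp add: sum.distrib sum_subtractf algebra_simps Pq_Suc del: power_Suc)
  also have "y ^ Suc s + (\<Sum>j\<le>s. q ^ Suc j * gb q s (Suc j) * Pq q (Suc j) x y * y ^ (s - j))
      = (\<Sum>j\<le>Suc s. q ^ j * gb q s j * Pq q j x y * y ^ (Suc s - j))"
    by (subst sum.atMost_Suc_shift) (simp add: gb_n0[OF q] Pq_def del: power_Suc)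
  also have "\<dots> = (\<Sum>j\<le>s. q ^ j * gb q s j * Pq q j x y * y ^ (Suc s - j))"
    by (rule sum_ext_bound) (auto simp: gb_zero[OF q])
  also have "\<dots> + (\<Sum>j\<le>s. gb q s j * Pq q j x y * (x - q ^ j * y) * y ^ (s - j))
      = (\<Sum>j\<le>s. x * (gb q s j * Pq q j x y * y ^ (s - j)))"
    unfolding sum.distrib[symmetric]
  proof (rule sum.cong)
    fix j assume "j \<in> {..s}"
    then have "y ^ (Suc s - j) = y * y ^ (s - j)" by (simp add: Suc_diff_le)
    then show "q ^ j * gb q s j * Pq q j x y * y ^ (Suc s - j) + gb q s j * Pq q j x y * (x - q ^ j * y) * y ^ (s - j)
        = x * (gb q s j * Pq q j x y * y ^ (s - j))" by (simp add: algebra_simps)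
  qed simp
  also have "\<dots> = x ^ Suc s" by (simp add: sum_distrib_left[symmetric] Suc.IH)
  finally show ?case by simp
qed

lemma gb_prod: assumes "i \<le> s" "s \<le> n"
  shows "gb q n (s - i) * gb q (n - (s - i)) i = gb q n s * gb q s i"
proof -
  have nz: "qpoch q q j \<noteq> 0" for j using qp_nz[OF q] .
  obtain a where a: "s = a + i" using assms(1) le_Suc_ex by (metis add.commute)
  have e: "s - i = a" "n - (s - i) = n - a" "n - a - i = n - s" "s - i = a" using a assms by auto
  have "gb q n (s - i) * gb q (n - (s - i)) i = qpoch q q n / (qpoch q q a * qpoch q q (n - a)) * (qpoch q q (n - a) / (qpoch q q i * qpoch q q (n - s)))"
    using assms a unfolding e by (simp add: gb_def e le_diff_conv2)
  also have "\<dots> = qpoch q q n / (qpoch q q s * qpoch q q (n - s)) * (qpoch q q s / (qpoch q q i * qpoch q q a))"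
    using nz by (simp add: field_simps)
  also have "\<dots> = gb q n s * gb q s i"
    using assms a by (simp add: gb_def)
  finally show ?thesis .
qed

lemma lemmaA: "(\<Sum>k=0..n. qbinom q n k * y ^ k * rs2 q (n - k) x y) = rs q n x"
proof -
  define g where "g k i = gb q n k * y ^ k * (gb q (n - k) i * Pq q i x y)" for k i
  have "(\<Sum>k=0..n. qbinom q n k * y ^ k * rs2 q (n - k) x y) = (\<Sum>k\<le>n. \<Sum>i\<le>n - k. g k i)"
    unfolding atLeast0AtMost g_def rs2_gb sum_distrib_left by (rule sum.cong) (auto simp: gb_eq)
  also have "\<dots> = (\<Sum>(k, i)\<in>{(k, i). k + i \<le> n}. g k i)"
  proof -
    have "Sigma {..n} (\<lambda>k. {..n - k}) = {(k, i). k + i \<le> n}" by auto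
    then show ?thesis by (simp add: sum.Sigma)
  qed
  also have "\<dots> = (\<Sum>s\<le>n. \<Sum>k\<le>s. g k (s - k))" by (rule sum.triangle_reindex_eq)
  also have "\<dots> = (\<Sum>s\<le>n. gb q n s * x ^ s)"
  proof (rule sum.cong)
    fix s assume s: "s \<in> {..n}"
    have "(\<Sum>k\<le>s. g k (s - k)) = (\<Sum>i\<le>s. g (s - i) (s - (s - i)))"
      unfolding atLeast0AtMost[symmetric] by (subst sum.atLeastAtMost_rev) simp
    also have "\<dots> = (\<Sum>i\<le>s. gb q n s * (gb q s i * Pq q i x y * y ^ (s - i)))"
    proof (rule sum.cong)
      fix i assume i: "i \<in> {..s}"
      have e: "s - (s - i) = i" using i by auto
      show "g (s - i) (s - (s - i)) = gb q n s * (gb q s i * Pq q i x y * y ^ (s - i))"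
        unfolding g_def e using gb_prod[of i s n] i s
        by (simp add: algebra_simps)
    qed simp
    also have "\<dots> = gb q n s * x ^ s" by (simp add: sum_distrib_left[symmetric] A1[symmetric])
    finally show "(\<Sum>k\<le>s. g k (s - k)) = gb q n s * x ^ s" .
  qed simp
  also have "\<dots> = rs q n x" by (simp add: rs_hh hh_def)
  finally show ?thesis .
qed

end

theorem corollary3p5:
  fixes q x y :: complex and n m :: nat
  assumes "norm q < 1"
  shows "(\<Sum>k=0..min n m. qbinom q n k * qbinom q m k * qpoch q q k * x ^ k
            * rs q (n + m - 2 * k) x)
       = (\<Sum>k=0..n. qbinom q n k * y ^ k * rs2 q (n - k) x y)
         * (\<Sum>j=0..m. qbinom q m j * y ^ j * rs2 q (m - j) x y)"
proof -
  have "(\<Sum>k=0..min n m. qbinom q n k * qbinom q m k * qpoch q q k * x ^ k * rs q (n + m - 2 * k) x)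
      = (\<Sum>k\<le>min n m. cc q n m k * x ^ k * hh q (n + m - 2 * k) x)"
    unfolding atLeast0AtMost by (rule sum.cong) (auto simp: cc_def gb_eq[OF assms] rs_hh[OF assms])
  also have "\<dots> = SS q n m x"
    unfolding SS_def
  proof (rule sum_ext_bound[symmetric])
    fix k assume "k > min n m"
    then have "cc q n m k = 0" by (intro cc_zero[OF assms]) auto
    then show "cc q n m k * x ^ k * hh q (n + m - 2 * k) x = 0" by simp
  qed simp
  also have "\<dots> = hh q n x * hh q m x" by (rule prod_formula[OF assms, symmetric])
  finally show ?thesis by (simp add: lemmaA[OF assms] rs_hh[OF assms])
qed


end
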